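(* Let $\Bbbk$ be a field, $A$ a $\Bbbk$-algebra, $\Gamma$ a subalgebra, $\sim$ an equivalence relation on $\mathrm{cfs}(\Gamma)$, and suppose $\Gamma$ is a Harish-Chandra block subalgebra of $A$ with respect to $\sim$. Let $V$ be an $A$-module and $\mathcal D\subseteq\mathrm{cfs}(\Gamma)/{\sim}$. Then $$A.\Big(\bigoplus_{B\in\mathcal D}V(B)\Big)\subseteq\bigoplus_{C\succ\mathcal D}V(C),$$ where $C\succ\mathcal D$ means $B\prec C$ for some $B\in\mathcal D$.
   Context: $\mathrm{cfs}(\Gamma)$: maximal two-sided ideals $\mathfrak m$ of $\Gamma$ with $\dim\Gamma/\mathfrak m<\infty$. For a class $B$, $\mathcal W(B)=\{\mathfrak m_1\cdots\mathfrak m_k:k\ge0,\mathfrak m_i\in B\}$. For a $\Gamma$-module $V$, $V(B)=\{v\in V:\mathfrak m v=0$ for some $\mathfrak m\in\mathcal W(B)\}$ (the sum of these is direct); $V$ is a block module if $V=\bigoplus_B V(B)$, and $\mathrm{Supp}(V)=\{B:V(B)\ne0\}$. $\Gamma$ is a Harish-Chandra block subalgebra of $A$ if $A/A\mathfrak m$ is a block module over $\Gamma$ for every $B$ and $\mathfrak m\in\mathcal W(B)$. $\prec$ is the preorder on $\mathrm{cfs}(\Gamma)/{\sim}$ generated by $B\prec C$ whenever $C\in\mathrm{Supp}(A/A\mathfrak m)$ for some $\mathfrak m\in B$. *)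

theory Defs
  imports Main "HOL.Vector_Spaces"
begin

definition k_algebra :: "('k::field \<Rightarrow> 'a::ring_1 \<Rightarrow> 'a) \<Rightarrow> bool" where
  "k_algebra scale \<longleftrightarrow> vector_space scale \<and>
     (\<forall>c x y. scale c (x * y) = scale c x * y \<and> scale c (x * y) = x * scale c y)"

definition subalgebra :: "('k::field \<Rightarrow> 'a::ring_1 \<Rightarrow> 'a) \<Rightarrow> 'a set \<Rightarrow> bool" where
  "subalgebra scale G \<longleftrightarrow> 1 \<in> G \<and> 0 \<in> G \<and>
     (\<forall>x\<in>G. \<forall>y\<in>G. x + y \<in> G \<and> x - y \<in> G \<and> x * y \<in> G) \<and>
     (\<forall>c. \<forall>x\<in>G. scale c x \<in> G)"

definition two_sided_ideal :: "'a::ring_1 set \<Rightarrow> 'a set \<Rightarrow> bool" where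
  "two_sided_ideal G I \<longleftrightarrow> I \<subseteq> G \<and> 0 \<in> I \<and>
     (\<forall>x\<in>I. \<forall>y\<in>I. x + y \<in> I \<and> x - y \<in> I) \<and>
     (\<forall>g\<in>G. \<forall>x\<in>I. g * x \<in> I \<and> x * g \<in> I)"

definition finite_codim :: "('k::field \<Rightarrow> 'a::ring_1 \<Rightarrow> 'a) \<Rightarrow> 'a set \<Rightarrow> 'a set \<Rightarrow> bool" where
  "finite_codim scale G I \<longleftrightarrow> (\<exists>S. finite S \<and> S \<subseteq> G \<and>
     (\<forall>x\<in>G. \<exists>c. x - (\<Sum>s\<in>S. scale (c s) s) \<in> I))"

definition cfs :: "('k::field \<Rightarrow> 'a::ring_1 \<Rightarrow> 'a) \<Rightarrow> 'a set \<Rightarrow> 'a set set" where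
  "cfs scale G = {m. two_sided_ideal G m \<and> m \<noteq> G \<and>
     (\<forall>J. two_sided_ideal G J \<and> m \<subseteq> J \<longrightarrow> J = m \<or> J = G) \<and> finite_codim scale G m}"

definition ideal_mult :: "'a::ring_1 set \<Rightarrow> 'a set \<Rightarrow> 'a set" where
  "ideal_mult I J = {(\<Sum>i<n. x i * y i) | (n::nat) x y. \<forall>i<n. x i \<in> I \<and> y i \<in> J}"

inductive_set words :: "'a::ring_1 set \<Rightarrow> 'a set set \<Rightarrow> 'a set set" for G B where
  words_unit: "G \<in> words G B"
| words_step: "I \<in> words G B \<Longrightarrow> m \<in> B \<Longrightarrow> ideal_mult I m \<in> words G B"

text \<open>For the G-module V/N (action act, N a submodule), the B-part
  V(B) = {v. m v = 0 (mod N) for some m in W(B)} (as a set of representatives).\<close>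
definition block_part :: "('a::ring_1 \<Rightarrow> 'v::ab_group_add \<Rightarrow> 'v) \<Rightarrow> 'v set \<Rightarrow> 'a set \<Rightarrow> 'a set set \<Rightarrow> 'v set" where
  "block_part act N G B = {v. \<exists>m\<in>words G B. \<forall>g\<in>m. act g v \<in> N}"

definition block_sum :: "('a::ring_1 \<Rightarrow> 'v::ab_group_add \<Rightarrow> 'v) \<Rightarrow> 'v set \<Rightarrow> 'a set \<Rightarrow> 'a set set set \<Rightarrow> 'v set" where
  "block_sum act N G Bs = {(\<Sum>B\<in>F. f B) | F f. finite F \<and> F \<subseteq> Bs \<and>
      (\<forall>B\<in>F. f B \<in> block_part act N G B)}"

definition block_module :: "('a::ring_1 \<Rightarrow> 'v::ab_group_add \<Rightarrow> 'v) \<Rightarrow> 'v set \<Rightarrow> 'a set \<Rightarrow> 'a set set set \<Rightarrow> bool" where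
  "block_module act N G Cl \<longleftrightarrow> (\<forall>v. \<exists>w\<in>block_sum act N G Cl. v - w \<in> N)"

definition Supp :: "('a::ring_1 \<Rightarrow> 'v::ab_group_add \<Rightarrow> 'v) \<Rightarrow> 'v set \<Rightarrow> 'a set \<Rightarrow> 'a set set set \<Rightarrow> 'a set set set" where
  "Supp act N G Cl = {B \<in> Cl. \<exists>v\<in>block_part act N G B. v \<notin> N}"

definition left_ideal_gen :: "'a::ring_1 set \<Rightarrow> 'a set" where
  "left_ideal_gen m = {(\<Sum>i<n. a i * g i) | (n::nat) a g. \<forall>i<n. g i \<in> m}"

definition classes :: "('k::field \<Rightarrow> 'a::ring_1 \<Rightarrow> 'a) \<Rightarrow> 'a set \<Rightarrow> ('a set \<times> 'a set) set \<Rightarrow> 'a set set set" where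
  "classes scale G R = cfs scale G // R"

definition HC_block_subalgebra :: "('k::field \<Rightarrow> 'a::ring_1 \<Rightarrow> 'a) \<Rightarrow> 'a set \<Rightarrow> ('a set \<times> 'a set) set \<Rightarrow> bool" where
  "HC_block_subalgebra scale G R \<longleftrightarrow>
     (\<forall>B\<in>classes scale G R. \<forall>m\<in>words G B.
        block_module (*) (left_ideal_gen m) G (classes scale G R))"

definition prec_step :: "('k::field \<Rightarrow> 'a::ring_1 \<Rightarrow> 'a) \<Rightarrow> 'a set \<Rightarrow> ('a set \<times> 'a set) set \<Rightarrow> ('a set set \<times> 'a set set) set" where
  "prec_step scale G R = {(B, C). B \<in> classes scale G R \<and> C \<in> classes scale G R \<and>
     (\<exists>m\<in>B. C \<in> Supp (*) (left_ideal_gen m) G (classes scale G R))}"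

definition prec :: "('k::field \<Rightarrow> 'a::ring_1 \<Rightarrow> 'a) \<Rightarrow> 'a set \<Rightarrow> ('a set \<times> 'a set) set \<Rightarrow> ('a set set \<times> 'a set set) set" where
  "prec scale G R = (prec_step scale G R)\<^sup>*"

definition A_module :: "('a::ring_1 \<Rightarrow> 'v::ab_group_add \<Rightarrow> 'v) \<Rightarrow> bool" where
  "A_module act \<longleftrightarrow> (\<forall>a b v w. act (a + b) v = act a v + act b v \<and>
     act a (v + w) = act a v + act a w \<and> act (a * b) v = act a (act b v) \<and> act 1 v = v)"

end

theory Submission
  imports Defs
begin

lemma sum_lt_closed:
  fixes M :: "'b::comm_monoid_add set"
  assumes "0 \<in> M" "\<And>x y. x \<in> M \<Longrightarrow> y \<in> M \<Longrightarrow> x + y \<in> M" "\<forall>i<(n::nat). t i \<in> M"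
  shows "(\<Sum>i<n. t i) \<in> M"
  using assms(3)
proof (induction n)
  case 0 then show ?case using assms(1) by simp
next
  case (Suc n) then show ?case using assms(2) by simp
qed

lemma sum_concat:
  fixes n1 n2 :: nat and A B :: "nat \<Rightarrow> 'b::comm_monoid_add"
  shows "(\<Sum>i<n1+n2. (if i < n1 then A i else B (i - n1))) = (\<Sum>i<n1. A i) + (\<Sum>i<n2. B i)"
proof (induction n2)
  case 0 then show ?case by simp
next
  case (Suc n) then show ?case by (simp add: add.assoc)
qed

lemma act_zero: assumes "A_module act" shows "act a 0 = 0"
proof -
  have "act a (0 + 0) = act a 0 + act a 0" using assms unfolding A_module_def by blast
  then show ?thesis by simp
qed

lemma act_add1: assumes "A_module act" shows "act (a + b) v = act a v + act b v"
  using assms unfolding A_module_def by blast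
lemma act_add2: assumes "A_module act" shows "act a (v + w) = act a v + act a w"
  using assms unfolding A_module_def by blast
lemma act_mult: assumes "A_module act" shows "act (a * b) v = act a (act b v)"
  using assms unfolding A_module_def by blast
lemma act_one: assumes "A_module act" shows "act 1 v = v"
  using assms unfolding A_module_def by blast

lemma act_diff: assumes "A_module act" shows "act (a - b) v = act a v - act b v"
proof -
  have "act ((a - b) + b) v = act (a - b) v + act b v" by (rule act_add1[OF assms])
  then show ?thesis by (simp add: algebra_simps)
qed

lemma act_sum1: assumes "A_module act" shows "act (\<Sum>i<(n::nat). t i) v = (\<Sum>i<n. act (t i) v)"
proof (induction n)
  case 0
  have "act (0 + 0) v = act 0 v + act 0 v" by (rule act_add1[OF assms])
  then show ?case by simp
next
  case (Suc n) then show ?case by (simp add: act_add1[OF assms])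
qed

lemma act_sum2: assumes "A_module act" "finite F" shows "act a (\<Sum>x\<in>F. f x) = (\<Sum>x\<in>F. act a (f x))"
  using assms(2)
proof (induction F rule: finite_induct)
  case empty then show ?case by (simp add: act_zero[OF assms(1)])
next
  case (insert x F) then show ?case by (simp add: act_add2[OF assms(1)])
qed

lemma cfs_ideal: "m \<in> cfs scale G \<Longrightarrow> two_sided_ideal G m"
  unfolding cfs_def by blast

definition WP :: "'a::ring_1 set \<Rightarrow> 'a set \<Rightarrow> bool" where
  "WP G W \<longleftrightarrow> W \<subseteq> G \<and> 0 \<in> W \<and> (\<forall>x\<in>W. \<forall>y\<in>W. x + y \<in> W) \<and> (\<forall>x\<in>W. \<forall>g\<in>G. x * g \<in> W)"

lemma ideal_mult_add:
  assumes "x \<in> ideal_mult I m" "y \<in> ideal_mult I m"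
  shows "x + y \<in> ideal_mult I m"
proof -
  obtain n1 :: nat and x1 y1 where 1: "x = (\<Sum>i<n1. x1 i * y1 i)" "\<forall>i<n1. x1 i \<in> I \<and> y1 i \<in> m"
    using assms(1) unfolding ideal_mult_def by blast
  obtain n2 :: nat and x2 y2 where 2: "y = (\<Sum>i<n2. x2 i * y2 i)" "\<forall>i<n2. x2 i \<in> I \<and> y2 i \<in> m"
    using assms(2) unfolding ideal_mult_def by blast
  define X where "X i = (if i < n1 then x1 i else x2 (i - n1))" for i
  define Y where "Y i = (if i < n1 then y1 i else y2 (i - n1))" for i
  have e: "(\<Sum>i<n1+n2. X i * Y i) = x + y"
  proof -
    have "(\<Sum>i<n1+n2. X i * Y i) = (\<Sum>i<n1+n2. (if i < n1 then x1 i * y1 i else x2 (i - n1) * y2 (i - n1)))"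
      unfolding X_def Y_def by (rule sum.cong) auto
    also have "\<dots> = x + y" using sum_concat[of n1 "\<lambda>i. x1 i * y1 i" "\<lambda>i. x2 i * y2 i" n2] 1 2 by simp
    finally show ?thesis .
  qed
  have "\<forall>i<n1+n2. X i \<in> I \<and> Y i \<in> m" using 1 2 unfolding X_def Y_def by auto
  then show ?thesis using e unfolding ideal_mult_def
    by (intro CollectI exI[of _ "n1+n2"] exI[of _ X] exI[of _ Y]) auto
qed

lemma words_WP:
  assumes sub: "subalgebra scale G" and Bs: "B \<subseteq> cfs scale G" and W: "W \<in> words G B"
  shows "WP G W"
  using W
proof (induction rule: words.induct)
  case words_unit then show ?case using sub unfolding WP_def subalgebra_def by blast
next
  case (words_step I m)
  have mi: "two_sided_ideal G m" using Bs words_step.hyps(2) cfs_ideal by blast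
  have mG: "m \<subseteq> G" using mi unfolding two_sided_ideal_def by blast
  have IG: "I \<subseteq> G" using words_step.IH unfolding WP_def by blast
  have "ideal_mult I m \<subseteq> G"
  proof
    fix z assume "z \<in> ideal_mult I m"
    then obtain n :: nat and x y where z: "z = (\<Sum>i<n. x i * y i)" "\<forall>i<n. x i \<in> I \<and> y i \<in> m"
      unfolding ideal_mult_def by blast
    have "\<forall>i<n. x i * y i \<in> G" using z(2) IG mG sub unfolding subalgebra_def by blast
    then show "z \<in> G" unfolding z(1) by (rule sum_lt_closed[rotated 2]) (use sub in \<open>auto simp: subalgebra_def\<close>)
  qed
  moreover have "0 \<in> ideal_mult I m" unfolding ideal_mult_def by force
  moreover have "\<forall>x\<in>ideal_mult I m. \<forall>y\<in>ideal_mult I m. x + y \<in> ideal_mult I m"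
    using ideal_mult_add by blast
  moreover have "\<forall>z\<in>ideal_mult I m. \<forall>g\<in>G. z * g \<in> ideal_mult I m"
  proof (intro ballI)
    fix z g assume "z \<in> ideal_mult I m" "g \<in> G"
    then obtain n :: nat and x y where z: "z = (\<Sum>i<n. x i * y i)" "\<forall>i<n. x i \<in> I \<and> y i \<in> m"
      unfolding ideal_mult_def by blast
    have "z * g = (\<Sum>i<n. x i * (y i * g))" unfolding z(1) by (simp add: sum_distrib_right mult.assoc)
    moreover have "\<forall>i<n. x i \<in> I \<and> y i * g \<in> m" using z(2) mi \<open>g \<in> G\<close> unfolding two_sided_ideal_def by blast
    ultimately show "z * g \<in> ideal_mult I m" unfolding ideal_mult_def
      by (intro CollectI exI[of _ n] exI[of _ x] exI[of _ "\<lambda>i. y i * g"]) auto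
  qed
  ultimately show ?case unfolding WP_def by blast
qed

lemma ideal_mult_sub_left:
  assumes "WP G I" "m \<subseteq> G"
  shows "ideal_mult I m \<subseteq> I"
proof
  fix z assume "z \<in> ideal_mult I m"
  then obtain n :: nat and x y where z: "z = (\<Sum>i<n. x i * y i)" "\<forall>i<n. x i \<in> I \<and> y i \<in> m"
    unfolding ideal_mult_def by blast
  have "\<forall>i<n. x i * y i \<in> I" using z(2) assms unfolding WP_def by blast
  then show "z \<in> I" unfolding z(1) by (rule sum_lt_closed[rotated 2]) (use assms in \<open>auto simp: WP_def\<close>)
qed

lemma ideal_mult_mono: "I \<subseteq> J \<Longrightarrow> ideal_mult I m \<subseteq> ideal_mult J m"
  unfolding ideal_mult_def by blast

lemma words_common:
  assumes sub: "subalgebra scale G" and Bs: "B \<subseteq> cfs scale G"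
    and I: "I \<in> words G B" and J: "J \<in> words G B"
  shows "\<exists>K\<in>words G B. K \<subseteq> I \<and> K \<subseteq> J"
  using J
proof (induction rule: words.induct)
  case words_unit
  have "I \<subseteq> G" using words_WP[OF sub Bs I] unfolding WP_def by blast
  then show ?case using I by blast
next
  case (words_step J' m)
  then obtain K where K: "K \<in> words G B" "K \<subseteq> I" "K \<subseteq> J'" by blast
  have mG: "m \<subseteq> G" using Bs words_step.hyps(2) cfs_ideal unfolding two_sided_ideal_def by blast
  have "ideal_mult K m \<subseteq> K" using ideal_mult_sub_left[OF words_WP[OF sub Bs K(1)] mG] .
  moreover have "ideal_mult K m \<subseteq> ideal_mult J' m" using ideal_mult_mono[OF K(3)] .
  moreover have "ideal_mult K m \<in> words G B" using K(1) words_step.hyps(2) by (rule words.words_step)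
  ultimately show ?case using K(2) by blast
qed

lemma block_part_zero:
  assumes "A_module act" shows "0 \<in> block_part act {0} G B"
  unfolding block_part_def using act_zero[OF assms] words.words_unit by blast

lemma block_part_add:
  assumes am: "A_module act" and sub: "subalgebra scale G" and Bs: "B \<subseteq> cfs scale G"
    and u: "u \<in> block_part act {0} G B" and w: "w \<in> block_part act {0} G B"
  shows "u + w \<in> block_part act {0} G B"
proof -
  obtain I where I: "I \<in> words G B" "\<forall>g\<in>I. act g u \<in> {0}" using u unfolding block_part_def by blast
  obtain J where J: "J \<in> words G B" "\<forall>g\<in>J. act g w \<in> {0}" using w unfolding block_part_def by blast
  obtain K where K: "K \<in> words G B" "K \<subseteq> I" "K \<subseteq> J" using words_common[OF sub Bs I(1) J(1)] by blast
  have "\<forall>g\<in>K. act g (u + w) \<in> {0}"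
  proof
    fix g assume "g \<in> K"
    then have "g \<in> I" "g \<in> J" using K by blast+
    then show "act g (u + w) \<in> {0}" using I J by (simp add: act_add2[OF am])
  qed
  then show ?thesis unfolding block_part_def using K(1) by blast
qed

lemma block_sum_zero: "0 \<in> block_sum act N G X"
  unfolding block_sum_def by force

lemma block_sum_single: "C \<in> X \<Longrightarrow> u \<in> block_part act N G C \<Longrightarrow> u \<in> block_sum act N G X"
  unfolding block_sum_def
  by (rule CollectI, rule exI[of _ "{C}"], rule exI[of _ "\<lambda>_. u"]) auto

lemma block_sum_mono: "X \<subseteq> Y \<Longrightarrow> block_sum act N G X \<subseteq> block_sum act N G Y"
  unfolding block_sum_def by blast

lemma block_sum_add:
  assumes am: "A_module act" and sub: "subalgebra scale G" and Xs: "\<forall>B\<in>X. B \<subseteq> cfs scale G"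
    and x: "x \<in> block_sum act {0} G X" and y: "y \<in> block_sum act {0} G X"
  shows "x + y \<in> block_sum act {0} G X"
proof -
  obtain F1 f1 where 1: "x = (\<Sum>B\<in>F1. f1 B)" "finite F1" "F1 \<subseteq> X" "\<forall>B\<in>F1. f1 B \<in> block_part act {0} G B"
    using x unfolding block_sum_def by blast
  obtain F2 f2 where 2: "y = (\<Sum>B\<in>F2. f2 B)" "finite F2" "F2 \<subseteq> X" "\<forall>B\<in>F2. f2 B \<in> block_part act {0} G B"
    using y unfolding block_sum_def by blast
  define f where "f B = (if B \<in> F1 then f1 B else 0) + (if B \<in> F2 then f2 B else 0)" for B
  have fin: "finite (F1 \<union> F2)" using 1 2 by simp
  have "(\<Sum>B\<in>F1 \<union> F2. f B) = (\<Sum>B\<in>F1 \<union> F2. (if B \<in> F1 then f1 B else 0)) + (\<Sum>B\<in>F1 \<union> F2. (if B \<in> F2 then f2 B else 0))"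
    unfolding f_def by (simp add: sum.distrib)
  also have "\<dots> = x + y"
  proof -
    have a: "(\<Sum>B\<in>F1 \<union> F2. (if B \<in> F1 then f1 B else 0)) = sum f1 ((F1 \<union> F2) \<inter> F1)"
      using sum.inter_restrict[OF fin, of f1 F1] by simp
    have b: "(\<Sum>B\<in>F1 \<union> F2. (if B \<in> F2 then f2 B else 0)) = sum f2 ((F1 \<union> F2) \<inter> F2)"
      using sum.inter_restrict[OF fin, of f2 F2] by simp
    have c: "(F1 \<union> F2) \<inter> F1 = F1" "(F1 \<union> F2) \<inter> F2 = F2" by blast+
    show ?thesis unfolding a b c 1(1) 2(1) ..
  qed
  finally have e: "(\<Sum>B\<in>F1 \<union> F2. f B) = x + y" .
  have "\<forall>B\<in>F1 \<union> F2. f B \<in> block_part act {0} G B"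
  proof
    fix B assume B: "B \<in> F1 \<union> F2"
    have Bs: "B \<subseteq> cfs scale G" using B 1(3) 2(3) Xs by blast
    have a: "(if B \<in> F1 then f1 B else 0) \<in> block_part act {0} G B" using 1(4) block_part_zero[OF am] by auto
    have b: "(if B \<in> F2 then f2 B else 0) \<in> block_part act {0} G B" using 2(4) block_part_zero[OF am] by auto
    show "f B \<in> block_part act {0} G B" unfolding f_def by (rule block_part_add[OF am sub Bs a b])
  qed
  then show ?thesis unfolding block_sum_def using e fin 1(3) 2(3)
    by (intro CollectI exI[of _ "F1 \<union> F2"] exI[of _ f]) auto
qed

lemma block_sum_sum_lt:
  assumes am: "A_module act" and sub: "subalgebra scale G" and Xs: "\<forall>B\<in>X. B \<subseteq> cfs scale G"
    and "\<forall>i<(n::nat). t i \<in> block_sum act {0} G X"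
  shows "(\<Sum>i<n. t i) \<in> block_sum act {0} G X"
  by (rule sum_lt_closed[OF block_sum_zero _ assms(4)]) (rule block_sum_add[OF am sub Xs])

lemma block_sum_sum:
  assumes am: "A_module act" and sub: "subalgebra scale G" and Xs: "\<forall>B\<in>X. B \<subseteq> cfs scale G"
    and fin: "finite F" and "\<forall>i\<in>F. t i \<in> block_sum act {0} G X"
  shows "(\<Sum>i\<in>F. t i) \<in> block_sum act {0} G X"
  using fin assms(5)
proof (induction F rule: finite_induct)
  case empty then show ?case using block_sum_zero by simp
next
  case (insert x F) then show ?case using block_sum_add[OF am sub Xs] by simp
qed


lemma act_sumF: assumes "A_module act" "finite F" shows "act (\<Sum>x\<in>F. f x) v = (\<Sum>x\<in>F. act (f x) v)"
  using assms(2)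
proof (induction F rule: finite_induct)
  case empty
  have "act (0 + 0) v = act 0 v + act 0 v" by (rule act_add1[OF assms(1)])
  then show ?case by simp
next
  case (insert x F) then show ?case by (simp add: act_add1[OF assms(1)])
qed

lemma classes_sub: "equiv (cfs scale G) R \<Longrightarrow> C \<in> classes scale G R \<Longrightarrow> C \<subseteq> cfs scale G"
  unfolding classes_def by (rule in_quotient_imp_subset)

lemma key:
  assumes am: "A_module act" and sub: "subalgebra scale G" and eq: "equiv (cfs scale G) R"
    and hc: "HC_block_subalgebra scale G R" and Bc: "B \<in> classes scale G R"
    and J: "J \<in> words G B"
  shows "\<forall>v. (\<forall>g\<in>J. act g v = 0) \<longrightarrow> (\<forall>a. act a v \<in>
            block_sum act {0} G {C \<in> classes scale G R. (B, C) \<in> prec scale G R})"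
  using J
proof (induction rule: words.induct)
  let ?S = "block_sum act {0} G {C \<in> classes scale G R. (B, C) \<in> prec scale G R}"
  case words_unit
  show ?case
  proof (intro allI impI)
    fix v a assume "\<forall>g\<in>G. act g v = 0"
    moreover have "1 \<in> G" using sub unfolding subalgebra_def by blast
    ultimately have "v = 0" using act_one[OF am, of v] by simp
    then show "act a v \<in> ?S" using act_zero[OF am] block_sum_zero by simp
  qed
next
  let ?S = "block_sum act {0} G {C \<in> classes scale G R. (B, C) \<in> prec scale G R}"
  let ?Cl = "classes scale G R"
  case (words_step I m)
  have Xs: "\<forall>C\<in>{C \<in> classes scale G R. (B, C) \<in> prec scale G R}. C \<subseteq> cfs scale G"
    using classes_sub[OF eq] by blast
  have Bs: "B \<subseteq> cfs scale G" using classes_sub[OF eq Bc] .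
  have mi: "two_sided_ideal G m" using Bs words_step.hyps(2) cfs_ideal by blast
  have IG: "I \<subseteq> G" using words_WP[OF sub Bs words_step.hyps(1)] unfolding WP_def by blast
  define J where "J = ideal_mult I m"
  have Jw: "J \<in> words G B" unfolding J_def using words_step.hyps by (rule words.words_step)
  have Jm: "J \<subseteq> m"
  proof
    fix z assume "z \<in> J"
    then obtain n :: nat and x y where z: "z = (\<Sum>i<n. x i * y i)" "\<forall>i<n. x i \<in> I \<and> y i \<in> m"
      unfolding J_def ideal_mult_def by blast
    have "\<forall>i<n. x i * y i \<in> m" using z(2) IG mi unfolding two_sided_ideal_def by blast
    then show "z \<in> m" unfolding z(1) by (rule sum_lt_closed[rotated 2]) (use mi in \<open>auto simp: two_sided_ideal_def\<close>)
  qed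
  have AJm: "left_ideal_gen J \<subseteq> left_ideal_gen m" using Jm unfolding left_ideal_gen_def by blast
  show ?case
  proof (intro allI impI)
    fix v a assume kv: "\<forall>g\<in>ideal_mult I m. act g v = 0"
    have killAJ: "act x v = 0" if xJ: "x \<in> left_ideal_gen J" for x
    proof -
      obtain n :: nat and b g where x: "x = (\<Sum>i<n. b i * g i)" "\<forall>i<n. g i \<in> J"
        using xJ unfolding left_ideal_gen_def by blast
      have "act x v = (\<Sum>i<n. act (b i) (act (g i) v))" unfolding x(1) act_sum1[OF am] act_mult[OF am] ..
      also have "\<dots> = 0" using x(2) kv act_zero[OF am] unfolding J_def by simp
      finally show ?thesis .
    qed
    have "block_module (*) (left_ideal_gen J) G ?Cl"
      using hc Bc Jw unfolding HC_block_subalgebra_def by blast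
    then obtain w where w: "w \<in> block_sum (*) (left_ideal_gen J) G ?Cl" "a - w \<in> left_ideal_gen J"
      unfolding block_module_def by blast
    obtain F f where F: "w = (\<Sum>C\<in>F. f C)" "finite F" "F \<subseteq> ?Cl"
        "\<forall>C\<in>F. f C \<in> block_part (*) (left_ideal_gen J) G C"
      using w(1) unfolding block_sum_def by blast
    have "act (a - w) v = 0" using killAJ w(2) .
    then have e: "act a v = (\<Sum>C\<in>F. act (f C) v)" unfolding act_diff[OF am] F(1) act_sumF[OF am F(2)] by simp
    have "\<forall>C\<in>F. act (f C) v \<in> ?S"
    proof
      fix C assume CF: "C \<in> F"
      obtain n' where n': "n' \<in> words G C" "\<forall>g\<in>n'. g * f C \<in> left_ideal_gen J"
        using F(4) CF unfolding block_part_def by blast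
      have CCl: "C \<in> ?Cl" using CF F(3) by blast
      show "act (f C) v \<in> ?S"
      proof (cases "C \<in> Supp (*) (left_ideal_gen m) G ?Cl")
        case True
        then have "(B, C) \<in> prec_step scale G R" unfolding prec_step_def using Bc CCl words_step.hyps(2) by blast
        then have pr: "(B, C) \<in> prec scale G R" unfolding prec_def by blast
        have "\<forall>g\<in>n'. act g (act (f C) v) \<in> {0}"
          using n'(2) killAJ by (simp add: act_mult[OF am, symmetric])
        then have "act (f C) v \<in> block_part act {0} G C" unfolding block_part_def using n'(1) by blast
        then show ?thesis by (rule block_sum_single[rotated]) (use CCl pr in blast)
      next
        case False
        have "f C \<in> block_part (*) (left_ideal_gen m) G C"
          unfolding block_part_def using n' AJm by blast
        then have "f C \<in> left_ideal_gen m" using False CCl unfolding Supp_def by blast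
        then obtain N :: nat and b x where fx: "f C = (\<Sum>i<N. b i * x i)" "\<forall>i<N. x i \<in> m"
          unfolding left_ideal_gen_def by blast
        have "\<forall>i<N. act (b i) (act (x i) v) \<in> ?S"
        proof (intro allI impI)
          fix i assume "i < N"
          have "\<forall>g\<in>I. act g (act (x i) v) = 0"
          proof
            fix g assume gI: "g \<in> I"
            have "g * x i = (\<Sum>j<(1::nat). (\<lambda>_. g) j * (\<lambda>_. x i) j)" by simp
            moreover have "\<forall>j<(1::nat). (\<lambda>_. g) j \<in> I \<and> (\<lambda>_. x i) j \<in> m" using gI fx(2) \<open>i < N\<close> by simp
            ultimately have "g * x i \<in> ideal_mult I m" unfolding ideal_mult_def
              by (intro CollectI exI[of _ "1::nat"] exI[of _ "\<lambda>_. g"] exI[of _ "\<lambda>_. x i"]) auto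
            then show "act g (act (x i) v) = 0" using kv by (simp add: act_mult[OF am, symmetric])
          qed
          then show "act (b i) (act (x i) v) \<in> ?S" using words_step.IH by blast
        qed
        then have "(\<Sum>i<N. act (b i) (act (x i) v)) \<in> ?S" by (rule block_sum_sum_lt[OF am sub Xs])
        then show ?thesis unfolding fx(1) act_sum1[OF am] act_mult[OF am] .
      qed
    qed
    then show "act a v \<in> ?S" unfolding e by (rule block_sum_sum[OF am sub Xs F(2)])
  qed
qed

theorem mainTheorem4:
  fixes scale :: "'k::field \<Rightarrow> 'a::ring_1 \<Rightarrow> 'a"
    and G :: "'a set"
    and R :: "('a set \<times> 'a set) set"
    and act :: "'a \<Rightarrow> 'v::ab_group_add \<Rightarrow> 'v"
    and D :: "'a set set set"
  assumes "k_algebra scale"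
    and "subalgebra scale G"
    and "equiv (cfs scale G) R"
    and "HC_block_subalgebra scale G R"
    and "A_module act"
    and "D \<subseteq> classes scale G R"
  shows "{act a v | a v. v \<in> block_sum act {0} G D}
           \<subseteq> block_sum act {0} G {C \<in> classes scale G R. \<exists>B\<in>D. (B, C) \<in> prec scale G R}"
proof
  let ?T = "block_sum act {0} G {C \<in> classes scale G R. \<exists>B\<in>D. (B, C) \<in> prec scale G R}"
  note am = assms(5) and sub = assms(2) and eq = assms(3)
  have Xs: "\<forall>C\<in>{C \<in> classes scale G R. \<exists>B\<in>D. (B, C) \<in> prec scale G R}. C \<subseteq> cfs scale G"
    using classes_sub[OF eq] by blast
  fix z assume "z \<in> {act a v | a v. v \<in> block_sum act {0} G D}"
  then obtain a v where z: "z = act a v" "v \<in> block_sum act {0} G D" by blast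
  obtain F f where F: "v = (\<Sum>B\<in>F. f B)" "finite F" "F \<subseteq> D" "\<forall>B\<in>F. f B \<in> block_part act {0} G B"
    using z(2) unfolding block_sum_def by blast
  have "\<forall>B\<in>F. act a (f B) \<in> ?T"
  proof
    fix B assume BF: "B \<in> F"
    then have BD: "B \<in> D" and Bc: "B \<in> classes scale G R" using F(3) assms(6) by blast+
    obtain J where J: "J \<in> words G B" "\<forall>g\<in>J. act g (f B) \<in> {0}" using F(4) BF unfolding block_part_def by blast
    have "act a (f B) \<in> block_sum act {0} G {C \<in> classes scale G R. (B, C) \<in> prec scale G R}"
      using key[OF am sub eq assms(4) Bc J(1)] J(2) by simp
    moreover have "block_sum act {0} G {C \<in> classes scale G R. (B, C) \<in> prec scale G R} \<subseteq> ?T"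
      by (rule block_sum_mono) (use BD in blast)
    ultimately show "act a (f B) \<in> ?T" by blast
  qed
  then have "(\<Sum>B\<in>F. act a (f B)) \<in> ?T" by (rule block_sum_sum[OF am sub Xs F(2)])
  then show "z \<in> ?T" unfolding z(1) F(1) act_sum2[OF am F(2)] .
qed

end
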